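(* Let $\mathcal{D}=(\mathcal{G}, X, Z, T, T', Y, Y')$ be random quantities on a probability space whose joint distribution (with densities, denoted generically by $p$) follows the causal structure of the Bayesian network with edges $X\to Z$, $\mathcal{G}\to Z$, $Z\to Y$, $T\to Y$, $Z\to Y'$, $T'\to Y'$, and optionally $X\to \mathcal{G}$, $X\to T$, $X\to T'$; that is, the joint density factorizes as $$p(\mathcal{G}, X, Z, T, T', Y, Y') = p(X)\,p(\mathcal{G}\mid X)\,p(T\mid X)\,p(T'\mid X)\,p(Z\mid \mathcal{G}, X)\,p(Y\mid Z, T)\,p(Y'\mid Z, T'),$$ where the factors $p(\mathcal{G}\mid X)$, $p(T\mid X)$, $p(T'\mid X)$ may or may not actually depend on $X$. Define $$J(\mathcal{D}) = \log p(Y'\mid Y, \mathcal{G}, X, T, T') + \log p(Y\mid \mathcal{G}, X, T).$$ Then $$J(\mathcal{D}) \ge \mathbb{E}_{p(Z\mid Y, \mathcal{G}, X, T)} \log p(Y\mid Z, T) + \log p(Y'\mid \mathcal{G}, X, T') - \mathrm{KL}\big[p(Z\mid Y, \mathcal{G}, X, T)\,\big\|\, p(Z\mid Y', \mathcal{G}, X, T')\big].$$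
   Context: $Y\in\mathbb{R}^n$ is an outcome vector (e.g. gene expressions), $X$ is a vector of covariates, $T$ is a treatment, $Z\in\mathbb{R}^d$ is an unobserved latent feature vector, $T'$ is a counterfactual treatment and $Y'$ the corresponding counterfactual outcome (unobserved). $\mathcal{G}=(\mathcal{V},\mathcal{E})$ is a graph with node feature matrix $\mathcal{V}\in\mathbb{R}^{n\times v}$ and adjacency matrix $\mathcal{E}\in\{0,1\}^{n\times n}$, treated as a (possibly deterministic) random variable. $\mathrm{KL}$ denotes Kullback–Leibler divergence, and all conditional densities appearing are assumed to exist and be positive. *)

theory Defs
  imports "HOL-Probability.Probability"
begin

text \<open>
Variables: G :: 'g (measure MG), X :: 'x (MX), Z :: 'z (MZ), T and T' :: 't (MT),
Y and Y' :: 'y (MY).  The joint density p (w.r.t. the product of the reference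
measures) is a function  p g x z t tp y yp.  Marginal densities are obtained by
integrating out variables (nonnegative integrals), conditional densities are
ratios of marginal densities, exactly as the generic notation p(A | B) = p(A,B)/p(B).
\<close>

type_synonym ('g,'x,'z,'t,'y) jdens = "'g \<Rightarrow> 'x \<Rightarrow> 'z \<Rightarrow> 't \<Rightarrow> 't \<Rightarrow> 'y \<Rightarrow> 'y \<Rightarrow> real"

definition m_YpYGXTTp :: "'z measure \<Rightarrow> ('g,'x,'z,'t,'y) jdens \<Rightarrow> 'g \<Rightarrow> 'x \<Rightarrow> 't \<Rightarrow> 't \<Rightarrow> 'y \<Rightarrow> 'y \<Rightarrow> ennreal" where
  "m_YpYGXTTp MZ p g x t tp y yp = (\<integral>\<^sup>+ z. ennreal (p g x z t tp y yp) \<partial>MZ)"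

definition m_YGXTTp :: "'z measure \<Rightarrow> 'y measure \<Rightarrow> ('g,'x,'z,'t,'y) jdens \<Rightarrow> 'g \<Rightarrow> 'x \<Rightarrow> 't \<Rightarrow> 't \<Rightarrow> 'y \<Rightarrow> ennreal" where
  "m_YGXTTp MZ MY p g x t tp y = (\<integral>\<^sup>+ z. \<integral>\<^sup>+ yp. ennreal (p g x z t tp y yp) \<partial>MY \<partial>MZ)"

definition m_YGXT :: "'z measure \<Rightarrow> 't measure \<Rightarrow> 'y measure \<Rightarrow> ('g,'x,'z,'t,'y) jdens \<Rightarrow> 'g \<Rightarrow> 'x \<Rightarrow> 't \<Rightarrow> 'y \<Rightarrow> ennreal" where
  "m_YGXT MZ MT MY p g x t y = (\<integral>\<^sup>+ z. \<integral>\<^sup>+ tp. \<integral>\<^sup>+ yp. ennreal (p g x z t tp y yp) \<partial>MY \<partial>MT \<partial>MZ)"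

definition m_GXT :: "'z measure \<Rightarrow> 't measure \<Rightarrow> 'y measure \<Rightarrow> ('g,'x,'z,'t,'y) jdens \<Rightarrow> 'g \<Rightarrow> 'x \<Rightarrow> 't \<Rightarrow> ennreal" where
  "m_GXT MZ MT MY p g x t = (\<integral>\<^sup>+ z. \<integral>\<^sup>+ tp. \<integral>\<^sup>+ y. \<integral>\<^sup>+ yp. ennreal (p g x z t tp y yp) \<partial>MY \<partial>MY \<partial>MT \<partial>MZ)"

definition m_ZYGXT :: "'t measure \<Rightarrow> 'y measure \<Rightarrow> ('g,'x,'z,'t,'y) jdens \<Rightarrow> 'g \<Rightarrow> 'x \<Rightarrow> 't \<Rightarrow> 'y \<Rightarrow> 'z \<Rightarrow> ennreal" where
  "m_ZYGXT MT MY p g x t y z = (\<integral>\<^sup>+ tp. \<integral>\<^sup>+ yp. ennreal (p g x z t tp y yp) \<partial>MY \<partial>MT)"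

definition m_YpGXTp :: "'z measure \<Rightarrow> 't measure \<Rightarrow> 'y measure \<Rightarrow> ('g,'x,'z,'t,'y) jdens \<Rightarrow> 'g \<Rightarrow> 'x \<Rightarrow> 't \<Rightarrow> 'y \<Rightarrow> ennreal" where
  "m_YpGXTp MZ MT MY p g x tp yp = (\<integral>\<^sup>+ z. \<integral>\<^sup>+ t. \<integral>\<^sup>+ y. ennreal (p g x z t tp y yp) \<partial>MY \<partial>MT \<partial>MZ)"

definition m_GXTp :: "'z measure \<Rightarrow> 't measure \<Rightarrow> 'y measure \<Rightarrow> ('g,'x,'z,'t,'y) jdens \<Rightarrow> 'g \<Rightarrow> 'x \<Rightarrow> 't \<Rightarrow> ennreal" where
  "m_GXTp MZ MT MY p g x tp = (\<integral>\<^sup>+ z. \<integral>\<^sup>+ t. \<integral>\<^sup>+ y. \<integral>\<^sup>+ yp. ennreal (p g x z t tp y yp) \<partial>MY \<partial>MY \<partial>MT \<partial>MZ)"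

definition m_ZYpGXTp :: "'t measure \<Rightarrow> 'y measure \<Rightarrow> ('g,'x,'z,'t,'y) jdens \<Rightarrow> 'g \<Rightarrow> 'x \<Rightarrow> 't \<Rightarrow> 'y \<Rightarrow> 'z \<Rightarrow> ennreal" where
  "m_ZYpGXTp MT MY p g x tp yp z = (\<integral>\<^sup>+ t. \<integral>\<^sup>+ y. ennreal (p g x z t tp y yp) \<partial>MY \<partial>MT)"

definition m_ZTY :: "'g measure \<Rightarrow> 'x measure \<Rightarrow> 't measure \<Rightarrow> 'y measure \<Rightarrow> ('g,'x,'z,'t,'y) jdens \<Rightarrow> 'z \<Rightarrow> 't \<Rightarrow> 'y \<Rightarrow> ennreal" where
  "m_ZTY MG MX MT MY p z t y = (\<integral>\<^sup>+ g. \<integral>\<^sup>+ x. \<integral>\<^sup>+ tp. \<integral>\<^sup>+ yp. ennreal (p g x z t tp y yp) \<partial>MY \<partial>MT \<partial>MX \<partial>MG)"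

definition m_ZT :: "'g measure \<Rightarrow> 'x measure \<Rightarrow> 't measure \<Rightarrow> 'y measure \<Rightarrow> ('g,'x,'z,'t,'y) jdens \<Rightarrow> 'z \<Rightarrow> 't \<Rightarrow> ennreal" where
  "m_ZT MG MX MT MY p z t = (\<integral>\<^sup>+ g. \<integral>\<^sup>+ x. \<integral>\<^sup>+ tp. \<integral>\<^sup>+ y. \<integral>\<^sup>+ yp. ennreal (p g x z t tp y yp) \<partial>MY \<partial>MY \<partial>MT \<partial>MX \<partial>MG)"

definition cond :: "ennreal \<Rightarrow> ennreal \<Rightarrow> real" where
  "cond num den = enn2real num / enn2real den"

definition c_Yp_given_YGXTTp where
  "c_Yp_given_YGXTTp MZ MY p g x t tp y yp =
     cond (m_YpYGXTTp MZ p g x t tp y yp) (m_YGXTTp MZ MY p g x t tp y)"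

definition c_Y_given_GXT where
  "c_Y_given_GXT MZ MT MY p g x t y = cond (m_YGXT MZ MT MY p g x t y) (m_GXT MZ MT MY p g x t)"

definition c_Yp_given_GXTp where
  "c_Yp_given_GXTp MZ MT MY p g x tp yp = cond (m_YpGXTp MZ MT MY p g x tp yp) (m_GXTp MZ MT MY p g x tp)"

definition c_Z_given_YGXT where
  "c_Z_given_YGXT MZ MT MY p g x t y z = cond (m_ZYGXT MT MY p g x t y z) (m_YGXT MZ MT MY p g x t y)"

definition c_Z_given_YpGXTp where
  "c_Z_given_YpGXTp MZ MT MY p g x tp yp z = cond (m_ZYpGXTp MT MY p g x tp yp z) (m_YpGXTp MZ MT MY p g x tp yp)"

definition c_Y_given_ZT where
  "c_Y_given_ZT MG MX MT MY p z t y = cond (m_ZTY MG MX MT MY p z t y) (m_ZT MG MX MT MY p z t)"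

end

theory Submission
  imports Defs
begin

lemma nn_scale:
  fixes h :: "'a \<Rightarrow> real"
  assumes "h \<in> borel_measurable M" "0 \<le> c" "\<And>w. w \<in> space M \<Longrightarrow> f w = c * h w"
  shows "(\<integral>\<^sup>+w. ennreal (f w) \<partial>M) = ennreal c * (\<integral>\<^sup>+w. ennreal (h w) \<partial>M)"
proof -
  have "(\<integral>\<^sup>+w. ennreal (f w) \<partial>M) = (\<integral>\<^sup>+w. ennreal c * ennreal (h w) \<partial>M)"
    using assms(2,3) by (intro nn_integral_cong) (simp add: ennreal_mult')
  also have "\<dots> = ennreal c * (\<integral>\<^sup>+w. ennreal (h w) \<partial>M)"
    using assms(1) by (intro nn_integral_cmult) simp
  finally show ?thesis .
qed

lemma nn_scale1:
  fixes h :: "'a \<Rightarrow> real"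
  assumes "h \<in> borel_measurable M" "(\<integral>\<^sup>+w. ennreal (h w) \<partial>M) = 1" "0 \<le> c"
    "\<And>w. w \<in> space M \<Longrightarrow> f w = c * h w"
  shows "(\<integral>\<^sup>+w. ennreal (f w) \<partial>M) = ennreal c"
  using nn_scale[of h M c f] assms by simp

lemma nn_pos:
  fixes h :: "'a \<Rightarrow> real"
  assumes "f \<in> borel_measurable M" "\<And>w. w \<in> space M \<Longrightarrow> 0 < f w"
    "(\<integral>\<^sup>+w. ennreal (h w) \<partial>M) = 1"
  shows "0 < integral\<^sup>N M f"
proof (rule ccontr)
  assume "\<not> 0 < integral\<^sup>N M f"
  then have "integral\<^sup>N M f = 0" by (simp add: not_less)
  then have "AE w in M. f w = 0" using assms(1) by (simp add: nn_integral_0_iff_AE)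
  moreover have "AE w in M. f w \<noteq> 0" by (rule AE_I2) (use assms(2) in force)
  ultimately have "AE w in M. False" by eventually_elim auto
  then have "AE w in M. ennreal (h w) = 0" by (rule AE_mp) auto
  then have "(\<integral>\<^sup>+w. ennreal (h w) \<partial>M) = (\<integral>\<^sup>+w. 0 \<partial>M)" by (rule nn_integral_cong_AE)
  then show False using assms(3) by simp
qed

theorem theorem1:
  fixes MG :: "'g measure" and MX :: "'x measure" and MZ :: "'z measure"
    and MT :: "'t measure" and MY :: "'y measure"
    and p :: "'g \<Rightarrow> 'x \<Rightarrow> 'z \<Rightarrow> 't \<Rightarrow> 't \<Rightarrow> 'y \<Rightarrow> 'y \<Rightarrow> real"
    and pX :: "'x \<Rightarrow> real" and pG :: "'x \<Rightarrow> 'g \<Rightarrow> real"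
    and pT :: "'x \<Rightarrow> 't \<Rightarrow> real" and pTp :: "'x \<Rightarrow> 't \<Rightarrow> real"
    and pZ :: "'g \<Rightarrow> 'x \<Rightarrow> 'z \<Rightarrow> real"
    and pY :: "'z \<Rightarrow> 't \<Rightarrow> 'y \<Rightarrow> real" and pYp :: "'z \<Rightarrow> 't \<Rightarrow> 'y \<Rightarrow> real"
    and g :: 'g and x :: 'x and t :: 't and tp :: 't and y :: 'y and yp :: 'y
  assumes sf: "sigma_finite_measure MG" "sigma_finite_measure MX" "sigma_finite_measure MZ"
      "sigma_finite_measure MT" "sigma_finite_measure MY"
    \<comment> \<open>measurability of the factors\<close>
    and meas: "pX \<in> borel_measurable MX"
      "(\<lambda>(x, g). pG x g) \<in> borel_measurable (MX \<Otimes>\<^sub>M MG)"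
      "(\<lambda>(x, t). pT x t) \<in> borel_measurable (MX \<Otimes>\<^sub>M MT)"
      "(\<lambda>(x, t). pTp x t) \<in> borel_measurable (MX \<Otimes>\<^sub>M MT)"
      "(\<lambda>(g, x, z). pZ g x z) \<in> borel_measurable (MG \<Otimes>\<^sub>M MX \<Otimes>\<^sub>M MZ)"
      "(\<lambda>(z, t, y). pY z t y) \<in> borel_measurable (MZ \<Otimes>\<^sub>M MT \<Otimes>\<^sub>M MY)"
      "(\<lambda>(z, t, y). pYp z t y) \<in> borel_measurable (MZ \<Otimes>\<^sub>M MT \<Otimes>\<^sub>M MY)"
    \<comment> \<open>the factors are (conditional) probability densities\<close>
    and norm: "(\<integral>\<^sup>+ x. ennreal (pX x) \<partial>MX) = 1"
      "\<And>x. x \<in> space MX \<Longrightarrow> (\<integral>\<^sup>+ g. ennreal (pG x g) \<partial>MG) = 1"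
      "\<And>x. x \<in> space MX \<Longrightarrow> (\<integral>\<^sup>+ t. ennreal (pT x t) \<partial>MT) = 1"
      "\<And>x. x \<in> space MX \<Longrightarrow> (\<integral>\<^sup>+ t. ennreal (pTp x t) \<partial>MT) = 1"
      "\<And>g x. g \<in> space MG \<Longrightarrow> x \<in> space MX \<Longrightarrow> (\<integral>\<^sup>+ z. ennreal (pZ g x z) \<partial>MZ) = 1"
      "\<And>z t. z \<in> space MZ \<Longrightarrow> t \<in> space MT \<Longrightarrow> (\<integral>\<^sup>+ y. ennreal (pY z t y) \<partial>MY) = 1"
      "\<And>z t. z \<in> space MZ \<Longrightarrow> t \<in> space MT \<Longrightarrow> (\<integral>\<^sup>+ y. ennreal (pYp z t y) \<partial>MY) = 1"
    \<comment> \<open>positivity of the factors\<close>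
    and pos: "\<And>x. x \<in> space MX \<Longrightarrow> 0 < pX x"
      "\<And>x g. x \<in> space MX \<Longrightarrow> g \<in> space MG \<Longrightarrow> 0 < pG x g"
      "\<And>x t. x \<in> space MX \<Longrightarrow> t \<in> space MT \<Longrightarrow> 0 < pT x t"
      "\<And>x t. x \<in> space MX \<Longrightarrow> t \<in> space MT \<Longrightarrow> 0 < pTp x t"
      "\<And>g x z. g \<in> space MG \<Longrightarrow> x \<in> space MX \<Longrightarrow> z \<in> space MZ \<Longrightarrow> 0 < pZ g x z"
      "\<And>z t y. z \<in> space MZ \<Longrightarrow> t \<in> space MT \<Longrightarrow> y \<in> space MY \<Longrightarrow> 0 < pY z t y"
      "\<And>z t y. z \<in> space MZ \<Longrightarrow> t \<in> space MT \<Longrightarrow> y \<in> space MY \<Longrightarrow> 0 < pYp z t y"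
    \<comment> \<open>factorization of the joint density according to the Bayesian network\<close>
    and fact: "\<And>g x z t tp y yp. g \<in> space MG \<Longrightarrow> x \<in> space MX \<Longrightarrow> z \<in> space MZ \<Longrightarrow>
        t \<in> space MT \<Longrightarrow> tp \<in> space MT \<Longrightarrow> y \<in> space MY \<Longrightarrow> yp \<in> space MY \<Longrightarrow>
        p g x z t tp y yp = pX x * pG x g * pT x t * pTp x tp * pZ g x z * pY z t y * pYp z tp yp"
    \<comment> \<open>the point at which the objective is evaluated\<close>
    and pt: "g \<in> space MG" "x \<in> space MX" "t \<in> space MT" "tp \<in> space MT"
      "y \<in> space MY" "yp \<in> space MY"
    \<comment> \<open>the conditional densities appearing exist (marginals are finite)\<close>
    and fin: "m_YpYGXTTp MZ p g x t tp y yp < \<infinity>" "m_YGXTTp MZ MY p g x t tp y < \<infinity>"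
      "m_YGXT MZ MT MY p g x t y < \<infinity>" "m_GXT MZ MT MY p g x t < \<infinity>"
      "m_YpGXTp MZ MT MY p g x tp yp < \<infinity>" "m_GXTp MZ MT MY p g x tp < \<infinity>"
      "\<And>z. z \<in> space MZ \<Longrightarrow> m_ZYGXT MT MY p g x t y z < \<infinity>"
      "\<And>z. z \<in> space MZ \<Longrightarrow> m_ZYpGXTp MT MY p g x tp yp z < \<infinity>"
      "\<And>z. z \<in> space MZ \<Longrightarrow> m_ZTY MG MX MT MY p z t y < \<infinity>"
      "\<And>z. z \<in> space MZ \<Longrightarrow> m_ZT MG MX MT MY p z t < \<infinity>"
    \<comment> \<open>the expectation and the KL divergence on the right-hand side are finite\<close>
    and int: "integrable (density MZ (\<lambda>z. ennreal (c_Z_given_YGXT MZ MT MY p g x t y z)))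
                (\<lambda>z. ln (c_Y_given_ZT MG MX MT MY p z t y))"
      "integrable (density MZ (\<lambda>z. ennreal (c_Z_given_YGXT MZ MT MY p g x t y z)))
                (\<lambda>z. ln (c_Z_given_YGXT MZ MT MY p g x t y z / c_Z_given_YpGXTp MZ MT MY p g x tp yp z))"
  shows "ln (c_Yp_given_YGXTTp MZ MY p g x t tp y yp) + ln (c_Y_given_GXT MZ MT MY p g x t y)
     \<ge> (\<integral>z. ln (c_Y_given_ZT MG MX MT MY p z t y)
            \<partial>density MZ (\<lambda>z. ennreal (c_Z_given_YGXT MZ MT MY p g x t y z)))
       + ln (c_Yp_given_GXTp MZ MT MY p g x tp yp)
       - KL_divergence (exp 1)
           (density MZ (\<lambda>z. ennreal (c_Z_given_YpGXTp MZ MT MY p g x tp yp z)))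
           (density MZ (\<lambda>z. ennreal (c_Z_given_YGXT MZ MT MY p g x t y z)))"
proof -
  interpret MG: sigma_finite_measure MG by (rule sf(1))
  interpret MX: sigma_finite_measure MX by (rule sf(2))
  interpret MZ: sigma_finite_measure MZ by (rule sf(3))
  interpret MT: sigma_finite_measure MT by (rule sf(4))
  interpret MY: sigma_finite_measure MY by (rule sf(5))
  note [measurable] = meas
  have mX: "pX \<in> borel_measurable MX" by (rule meas(1))
  have mG: "pG x' \<in> borel_measurable MG" if "x' \<in> space MX" for x' using that by measurable
  have mT: "pT x' \<in> borel_measurable MT" if "x' \<in> space MX" for x' using that by measurable
  have mTp: "pTp x' \<in> borel_measurable MT" if "x' \<in> space MX" for x' using that by measurable
  have mZ: "pZ g' x' \<in> borel_measurable MZ" if "g' \<in> space MG" "x' \<in> space MX" for g' x'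
    using that by measurable
  have mY: "pY z t' \<in> borel_measurable MY" if "z \<in> space MZ" "t' \<in> space MT" for z t'
    using that by measurable
  have mYp: "pYp z t' \<in> borel_measurable MY" if "z \<in> space MZ" "t' \<in> space MT" for z t'
    using that by measurable
  have mZ2: "(\<lambda>(g', x'). pZ g' x' z) \<in> borel_measurable (MG \<Otimes>\<^sub>M MX)" if "z \<in> space MZ" for z
  proof -
    have "(\<lambda>w. (\<lambda>(g, x, z). pZ g x z) (fst w, snd w, z)) \<in> borel_measurable (MG \<Otimes>\<^sub>M MX)"
      by (rule measurable_compose[OF _ meas(5)]) (use that in measurable)
    then show ?thesis by (simp add: split_beta')
  qed
  have mY1: "(\<lambda>z. pY z t' y') \<in> borel_measurable MZ" if "t' \<in> space MT" "y' \<in> space MY" for t' y'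
  proof -
    have "(\<lambda>w. (\<lambda>(z, t, y). pY z t y) (w, t', y')) \<in> borel_measurable MZ"
      by (rule measurable_compose[OF _ meas(6)]) (use that in measurable)
    then show ?thesis by simp
  qed
  have mYp1: "(\<lambda>z. pYp z t' y') \<in> borel_measurable MZ" if "t' \<in> space MT" "y' \<in> space MY" for t' y'
  proof -
    have "(\<lambda>w. (\<lambda>(z, t, y). pYp z t y) (w, t', y')) \<in> borel_measurable MZ"
      by (rule measurable_compose[OF _ meas(7)]) (use that in measurable)
    then show ?thesis by simp
  qed
  note mZ1[measurable] = mZ[OF pt(1,2)]
  note mY1'[measurable] = mY1[OF pt(3,5)]
  note mYp1'[measurable] = mYp1[OF pt(4,6)]
  note nnf = pos[THEN less_imp_le]

  have m7: "m_ZYGXT MT MY p g x t y z = ennreal (pX x * pG x g * pT x t * pZ g x z * pY z t y)"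
    if z: "z \<in> space MZ" for z
  proof -
    have "m_ZYGXT MT MY p g x t y z =
      (\<integral>\<^sup>+tp'. ennreal ((pX x * pG x g * pT x t * pZ g x z * pY z t y) * pTp x tp') \<partial>MT)"
      unfolding m_ZYGXT_def
    proof (intro nn_integral_cong)
      fix tp' assume tp': "tp' \<in> space MT"
      show "(\<integral>\<^sup>+yp'. ennreal (p g x z t tp' y yp') \<partial>MY) =
        ennreal ((pX x * pG x g * pT x t * pZ g x z * pY z t y) * pTp x tp')"
        by (rule nn_scale1[where h="pYp z tp'"])
          (use z tp' pt in \<open>auto simp: fact mult_ac intro!: mYp norm mult_nonneg_nonneg nnf\<close>)
    qed
    also have "\<dots> = ennreal (pX x * pG x g * pT x t * pZ g x z * pY z t y)"
      by (rule nn_scale1[where h="pTp x"])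
        (use z pt in \<open>auto simp: fact mult_ac intro!: mTp norm mult_nonneg_nonneg nnf\<close>)
    finally show ?thesis .
  qed
  have m8: "m_ZYpGXTp MT MY p g x tp yp z = ennreal (pX x * pG x g * pTp x tp * pZ g x z * pYp z tp yp)"
    if z: "z \<in> space MZ" for z
  proof -
    have "m_ZYpGXTp MT MY p g x tp yp z =
      (\<integral>\<^sup>+t'. ennreal ((pX x * pG x g * pTp x tp * pZ g x z * pYp z tp yp) * pT x t') \<partial>MT)"
      unfolding m_ZYpGXTp_def
    proof (intro nn_integral_cong)
      fix t' assume t': "t' \<in> space MT"
      show "(\<integral>\<^sup>+y'. ennreal (p g x z t' tp y' yp) \<partial>MY) =
        ennreal ((pX x * pG x g * pTp x tp * pZ g x z * pYp z tp yp) * pT x t')"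
        by (rule nn_scale1[where h="pY z t'"])
          (use z t' pt in \<open>auto simp: fact mult_ac intro!: mY norm mult_nonneg_nonneg nnf\<close>)
    qed
    also have "\<dots> = ennreal (pX x * pG x g * pTp x tp * pZ g x z * pYp z tp yp)"
      by (rule nn_scale1[where h="pT x"])
        (use z pt in \<open>auto simp: fact mult_ac intro!: mT norm mult_nonneg_nonneg nnf\<close>)
    finally show ?thesis .
  qed

  define C where "C z = (\<integral>\<^sup>+g'. \<integral>\<^sup>+x'. ennreal (pX x' * pG x' g' * pT x' t * pZ g' x' z) \<partial>MX \<partial>MG)" for z

  have m9: "m_ZTY MG MX MT MY p z t y = C z * ennreal (pY z t y)" if z: "z \<in> space MZ" for z
  proof -
    note mZ2[OF z, measurable]
    have "m_ZTY MG MX MT MY p z t y =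
      (\<integral>\<^sup>+g'. \<integral>\<^sup>+x'. ennreal ((pX x' * pG x' g' * pT x' t * pZ g' x' z) * pY z t y) \<partial>MX \<partial>MG)"
      unfolding m_ZTY_def
    proof (intro nn_integral_cong)
      fix g' x' assume g': "g' \<in> space MG" and x': "x' \<in> space MX"
      have "(\<integral>\<^sup>+tp'. \<integral>\<^sup>+yp'. ennreal (p g' x' z t tp' y yp') \<partial>MY \<partial>MT) =
        (\<integral>\<^sup>+tp'. ennreal ((pX x' * pG x' g' * pT x' t * pZ g' x' z * pY z t y) * pTp x' tp') \<partial>MT)"
      proof (intro nn_integral_cong)
        fix tp' assume tp': "tp' \<in> space MT"
        show "(\<integral>\<^sup>+yp'. ennreal (p g' x' z t tp' y yp') \<partial>MY) =
          ennreal ((pX x' * pG x' g' * pT x' t * pZ g' x' z * pY z t y) * pTp x' tp')"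
          by (rule nn_scale1[where h="pYp z tp'"])
            (use z tp' g' x' pt in \<open>auto simp: fact mult_ac intro!: mYp norm mult_nonneg_nonneg nnf\<close>)
      qed
      also have "\<dots> = ennreal ((pX x' * pG x' g' * pT x' t * pZ g' x' z) * pY z t y)"
        by (rule nn_scale1[where h="pTp x'"])
          (use z g' x' pt in \<open>auto simp: fact mult_ac intro!: mTp norm mult_nonneg_nonneg nnf\<close>)
      finally show "(\<integral>\<^sup>+tp'. \<integral>\<^sup>+yp'. ennreal (p g' x' z t tp' y yp') \<partial>MY \<partial>MT) =
         ennreal ((pX x' * pG x' g' * pT x' t * pZ g' x' z) * pY z t y)" .
    qed
    also have "\<dots> = (\<integral>\<^sup>+g'. (\<integral>\<^sup>+x'. ennreal (pX x' * pG x' g' * pT x' t * pZ g' x' z) \<partial>MX) * ennreal (pY z t y) \<partial>MG)"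
    proof (intro nn_integral_cong)
      fix g' assume g': "g' \<in> space MG"
      have "(\<integral>\<^sup>+x'. ennreal ((pX x' * pG x' g' * pT x' t * pZ g' x' z) * pY z t y) \<partial>MX) =
        (\<integral>\<^sup>+x'. ennreal (pX x' * pG x' g' * pT x' t * pZ g' x' z) * ennreal (pY z t y) \<partial>MX)"
        by (intro nn_integral_cong ennreal_mult'') (use z pt in \<open>auto intro!: nnf\<close>)
      also have "\<dots> = (\<integral>\<^sup>+x'. ennreal (pX x' * pG x' g' * pT x' t * pZ g' x' z) \<partial>MX) * ennreal (pY z t y)"
        by (rule nn_integral_multc) (use g' pt in measurable)
      finally show "(\<integral>\<^sup>+x'. ennreal ((pX x' * pG x' g' * pT x' t * pZ g' x' z) * pY z t y) \<partial>MX) =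
        (\<integral>\<^sup>+x'. ennreal (pX x' * pG x' g' * pT x' t * pZ g' x' z) \<partial>MX) * ennreal (pY z t y)" .
    qed
    also have "\<dots> = C z * ennreal (pY z t y)"
      unfolding C_def by (rule nn_integral_multc) (use pt in measurable)
    finally show ?thesis .
  qed

  have m10: "m_ZT MG MX MT MY p z t = C z" if z: "z \<in> space MZ" for z
    unfolding m_ZT_def C_def
  proof (intro nn_integral_cong)
    fix g' x' assume g': "g' \<in> space MG" and x': "x' \<in> space MX"
    have "(\<integral>\<^sup>+tp'. \<integral>\<^sup>+y'. \<integral>\<^sup>+yp'. ennreal (p g' x' z t tp' y' yp') \<partial>MY \<partial>MY \<partial>MT) =
      (\<integral>\<^sup>+tp'. \<integral>\<^sup>+y'. ennreal (pX x' * pG x' g' * pT x' t * pTp x' tp' * pZ g' x' z * pY z t y') \<partial>MY \<partial>MT)"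
    proof (intro nn_integral_cong)
      fix tp' y' assume tp': "tp' \<in> space MT" and y': "y' \<in> space MY"
      show "(\<integral>\<^sup>+yp'. ennreal (p g' x' z t tp' y' yp') \<partial>MY) =
        ennreal (pX x' * pG x' g' * pT x' t * pTp x' tp' * pZ g' x' z * pY z t y')"
        by (rule nn_scale1[where h="pYp z tp'"])
          (use z tp' y' g' x' pt in \<open>auto simp: fact mult_ac intro!: mYp norm mult_nonneg_nonneg nnf\<close>)
    qed
    also have "\<dots> = (\<integral>\<^sup>+tp'. ennreal (pX x' * pG x' g' * pT x' t * pTp x' tp' * pZ g' x' z) \<partial>MT)"
    proof (intro nn_integral_cong)
      fix tp' assume tp': "tp' \<in> space MT"
      show "(\<integral>\<^sup>+y'. ennreal (pX x' * pG x' g' * pT x' t * pTp x' tp' * pZ g' x' z * pY z t y') \<partial>MY) =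
        ennreal (pX x' * pG x' g' * pT x' t * pTp x' tp' * pZ g' x' z)"
        by (rule nn_scale1[where h="pY z t"])
          (use z tp' g' x' pt in \<open>auto simp: mult_ac intro!: mY norm mult_nonneg_nonneg nnf\<close>)
    qed
    also have "\<dots> = ennreal (pX x' * pG x' g' * pT x' t * pZ g' x' z)"
      by (rule nn_scale1[where h="pTp x'"])
        (use z g' x' pt in \<open>auto simp: mult_ac intro!: mTp norm mult_nonneg_nonneg nnf\<close>)
    finally show "(\<integral>\<^sup>+tp'. \<integral>\<^sup>+y'. \<integral>\<^sup>+yp'. ennreal (p g' x' z t tp' y' yp') \<partial>MY \<partial>MY \<partial>MT) =
      ennreal (pX x' * pG x' g' * pT x' t * pZ g' x' z)" .
  qed

  define Py_e where "Py_e = (\<integral>\<^sup>+z. ennreal (pZ g x z * pY z t y) \<partial>MZ)"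
  define Pyp_e where "Pyp_e = (\<integral>\<^sup>+z. ennreal (pZ g x z * pYp z tp yp) \<partial>MZ)"
  define Pb_e where "Pb_e = (\<integral>\<^sup>+z. ennreal (pZ g x z * pY z t y * pYp z tp yp) \<partial>MZ)"

  have m1: "m_YpYGXTTp MZ p g x t tp y yp = ennreal (pX x * pG x g * pT x t * pTp x tp) * Pb_e"
    unfolding m_YpYGXTTp_def Pb_e_def
    by (rule nn_scale) (use pt in \<open>auto simp: fact mult_ac intro!: mult_nonneg_nonneg nnf\<close>)

  have m2: "m_YGXTTp MZ MY p g x t tp y = ennreal (pX x * pG x g * pT x t * pTp x tp) * Py_e"
  proof -
    have "m_YGXTTp MZ MY p g x t tp y =
      (\<integral>\<^sup>+z. ennreal ((pX x * pG x g * pT x t * pTp x tp * pZ g x z * pY z t y)) \<partial>MZ)"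
      unfolding m_YGXTTp_def
    proof (intro nn_integral_cong)
      fix z assume z: "z \<in> space MZ"
      show "(\<integral>\<^sup>+yp'. ennreal (p g x z t tp y yp') \<partial>MY) =
        ennreal (pX x * pG x g * pT x t * pTp x tp * pZ g x z * pY z t y)"
        by (rule nn_scale1[where h="pYp z tp"])
          (use z pt in \<open>auto simp: fact mult_ac intro!: mYp norm mult_nonneg_nonneg nnf\<close>)
    qed
    also have "\<dots> = ennreal (pX x * pG x g * pT x t * pTp x tp) * Py_e"
      unfolding Py_e_def
      by (rule nn_scale) (use pt in \<open>auto simp: mult_ac intro!: mult_nonneg_nonneg nnf\<close>)
    finally show ?thesis .
  qed

  have m3: "m_YGXT MZ MT MY p g x t y = ennreal (pX x * pG x g * pT x t) * Py_e"
  proof -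
    have "m_YGXT MZ MT MY p g x t y = (\<integral>\<^sup>+z. m_ZYGXT MT MY p g x t y z \<partial>MZ)"
      by (simp add: m_YGXT_def m_ZYGXT_def)
    also have "\<dots> = (\<integral>\<^sup>+z. ennreal (pX x * pG x g * pT x t * pZ g x z * pY z t y) \<partial>MZ)"
      by (intro nn_integral_cong) (simp add: m7)
    also have "\<dots> = ennreal (pX x * pG x g * pT x t) * Py_e"
      unfolding Py_e_def
      by (rule nn_scale) (use pt in \<open>auto simp: mult_ac intro!: mult_nonneg_nonneg nnf\<close>)
    finally show ?thesis .
  qed

  have m5: "m_YpGXTp MZ MT MY p g x tp yp = ennreal (pX x * pG x g * pTp x tp) * Pyp_e"
  proof -
    have "m_YpGXTp MZ MT MY p g x tp yp = (\<integral>\<^sup>+z. m_ZYpGXTp MT MY p g x tp yp z \<partial>MZ)"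
      by (simp add: m_YpGXTp_def m_ZYpGXTp_def)
    also have "\<dots> = (\<integral>\<^sup>+z. ennreal (pX x * pG x g * pTp x tp * pZ g x z * pYp z tp yp) \<partial>MZ)"
      by (intro nn_integral_cong) (simp add: m8)
    also have "\<dots> = ennreal (pX x * pG x g * pTp x tp) * Pyp_e"
      unfolding Pyp_e_def
      by (rule nn_scale) (use pt in \<open>auto simp: mult_ac intro!: mult_nonneg_nonneg nnf\<close>)
    finally show ?thesis .
  qed

  have m4: "m_GXT MZ MT MY p g x t = ennreal (pX x * pG x g * pT x t)"
  proof -
    have "m_GXT MZ MT MY p g x t = (\<integral>\<^sup>+z. ennreal ((pX x * pG x g * pT x t) * pZ g x z) \<partial>MZ)"
      unfolding m_GXT_def
    proof (intro nn_integral_cong)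
      fix z assume z: "z \<in> space MZ"
      have "(\<integral>\<^sup>+tp'. \<integral>\<^sup>+y'. \<integral>\<^sup>+yp'. ennreal (p g x z t tp' y' yp') \<partial>MY \<partial>MY \<partial>MT) =
        (\<integral>\<^sup>+tp'. \<integral>\<^sup>+y'. ennreal (pX x * pG x g * pT x t * pTp x tp' * pZ g x z * pY z t y') \<partial>MY \<partial>MT)"
      proof (intro nn_integral_cong)
        fix tp' y' assume tp': "tp' \<in> space MT" and y': "y' \<in> space MY"
        show "(\<integral>\<^sup>+yp'. ennreal (p g x z t tp' y' yp') \<partial>MY) =
          ennreal (pX x * pG x g * pT x t * pTp x tp' * pZ g x z * pY z t y')"
          by (rule nn_scale1[where h="pYp z tp'"])
            (use z tp' y' pt in \<open>auto simp: fact mult_ac intro!: mYp norm mult_nonneg_nonneg nnf\<close>)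
      qed
      also have "\<dots> = (\<integral>\<^sup>+tp'. ennreal (pX x * pG x g * pT x t * pTp x tp' * pZ g x z) \<partial>MT)"
      proof (intro nn_integral_cong)
        fix tp' assume tp': "tp' \<in> space MT"
        show "(\<integral>\<^sup>+y'. ennreal (pX x * pG x g * pT x t * pTp x tp' * pZ g x z * pY z t y') \<partial>MY) =
          ennreal (pX x * pG x g * pT x t * pTp x tp' * pZ g x z)"
          by (rule nn_scale1[where h="pY z t"])
            (use z tp' pt in \<open>auto simp: mult_ac intro!: mY norm mult_nonneg_nonneg nnf\<close>)
      qed
      also have "\<dots> = ennreal ((pX x * pG x g * pT x t) * pZ g x z)"
        by (rule nn_scale1[where h="pTp x"])
          (use z pt in \<open>auto simp: mult_ac intro!: mTp norm mult_nonneg_nonneg nnf\<close>)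
      finally show "(\<integral>\<^sup>+tp'. \<integral>\<^sup>+y'. \<integral>\<^sup>+yp'. ennreal (p g x z t tp' y' yp') \<partial>MY \<partial>MY \<partial>MT) =
        ennreal ((pX x * pG x g * pT x t) * pZ g x z)" .
    qed
    also have "\<dots> = ennreal (pX x * pG x g * pT x t)"
      by (rule nn_scale1[where h="pZ g x"])
        (use pt in \<open>auto simp: mult_ac intro!: mZ norm mult_nonneg_nonneg nnf\<close>)
    finally show ?thesis .
  qed

  have m6: "m_GXTp MZ MT MY p g x tp = ennreal (pX x * pG x g * pTp x tp)"
  proof -
    have "m_GXTp MZ MT MY p g x tp = (\<integral>\<^sup>+z. ennreal ((pX x * pG x g * pTp x tp) * pZ g x z) \<partial>MZ)"
      unfolding m_GXTp_def
    proof (intro nn_integral_cong)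
      fix z assume z: "z \<in> space MZ"
      have "(\<integral>\<^sup>+t'. \<integral>\<^sup>+y'. \<integral>\<^sup>+yp'. ennreal (p g x z t' tp y' yp') \<partial>MY \<partial>MY \<partial>MT) =
        (\<integral>\<^sup>+t'. \<integral>\<^sup>+y'. ennreal (pX x * pG x g * pT x t' * pTp x tp * pZ g x z * pY z t' y') \<partial>MY \<partial>MT)"
      proof (intro nn_integral_cong)
        fix t' y' assume t': "t' \<in> space MT" and y': "y' \<in> space MY"
        show "(\<integral>\<^sup>+yp'. ennreal (p g x z t' tp y' yp') \<partial>MY) =
          ennreal (pX x * pG x g * pT x t' * pTp x tp * pZ g x z * pY z t' y')"
          by (rule nn_scale1[where h="pYp z tp"])
            (use z t' y' pt in \<open>auto simp: fact mult_ac intro!: mYp norm mult_nonneg_nonneg nnf\<close>)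
      qed
      also have "\<dots> = (\<integral>\<^sup>+t'. ennreal ((pX x * pG x g * pTp x tp * pZ g x z) * pT x t') \<partial>MT)"
      proof (intro nn_integral_cong)
        fix t' assume t': "t' \<in> space MT"
        show "(\<integral>\<^sup>+y'. ennreal (pX x * pG x g * pT x t' * pTp x tp * pZ g x z * pY z t' y') \<partial>MY) =
          ennreal ((pX x * pG x g * pTp x tp * pZ g x z) * pT x t')"
          by (rule nn_scale1[where h="pY z t'"])
            (use z t' pt in \<open>auto simp: mult_ac intro!: mY norm mult_nonneg_nonneg nnf\<close>)
      qed
      also have "\<dots> = ennreal ((pX x * pG x g * pTp x tp) * pZ g x z)"
        by (rule nn_scale1[where h="pT x"])
          (use z pt in \<open>auto simp: mult_ac intro!: mT norm mult_nonneg_nonneg nnf\<close>)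
      finally show "(\<integral>\<^sup>+t'. \<integral>\<^sup>+y'. \<integral>\<^sup>+yp'. ennreal (p g x z t' tp y' yp') \<partial>MY \<partial>MY \<partial>MT) =
        ennreal ((pX x * pG x g * pTp x tp) * pZ g x z)" .
    qed
    also have "\<dots> = ennreal (pX x * pG x g * pTp x tp)"
      by (rule nn_scale1[where h="pZ g x"])
        (use pt in \<open>auto simp: mult_ac intro!: mZ norm mult_nonneg_nonneg nnf\<close>)
    finally show ?thesis .
  qed
  have A3pos: "0 < pX x * pG x g * pT x t" using pt by (auto intro!: mult_pos_pos pos)
  have A4pos: "0 < pX x * pG x g * pT x t * pTp x tp" using pt by (auto intro!: mult_pos_pos pos)
  have A5pos: "0 < pX x * pG x g * pTp x tp" using pt by (auto intro!: mult_pos_pos pos)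

  have "(\<lambda>z. ennreal (pZ g x z * pY z t y)) \<in> borel_measurable MZ" by measurable
  then have Py_pos: "0 < Py_e" unfolding Py_e_def
    by (rule nn_pos[where h="pZ g x"]) (use pt in \<open>auto intro!: mult_pos_pos pos norm\<close>)
  have "(\<lambda>z. ennreal (pZ g x z * pYp z tp yp)) \<in> borel_measurable MZ" by measurable
  then have Pyp_pos: "0 < Pyp_e" unfolding Pyp_e_def
    by (rule nn_pos[where h="pZ g x"]) (use pt in \<open>auto intro!: mult_pos_pos pos norm\<close>)
  have "(\<lambda>z. ennreal (pZ g x z * pY z t y * pYp z tp yp)) \<in> borel_measurable MZ" by measurable
  then have Pb_pos: "0 < Pb_e" unfolding Pb_e_def
    by (rule nn_pos[where h="pZ g x"]) (use pt in \<open>auto intro!: mult_pos_pos pos norm\<close>)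
  have Py_fin: "Py_e < \<infinity>" using fin(3) m3 A3pos Py_pos by (auto simp: ennreal_mult_less_top)
  have Pyp_fin: "Pyp_e < \<infinity>" using fin(5) m5 A5pos Pyp_pos by (auto simp: ennreal_mult_less_top)
  have Pb_fin: "Pb_e < \<infinity>" using fin(1) m1 A4pos Pb_pos by (auto simp: ennreal_mult_less_top)
  define Py where "Py = enn2real Py_e"
  define Pyp where "Pyp = enn2real Pyp_e"
  define Pb where "Pb = enn2real Pb_e"
  have Py0: "0 < Py" using Py_pos Py_fin by (simp add: Py_def enn2real_positive_iff)
  have Pyp0: "0 < Pyp" using Pyp_pos Pyp_fin by (simp add: Pyp_def enn2real_positive_iff)
  have Pb0: "0 < Pb" using Pb_pos Pb_fin by (simp add: Pb_def enn2real_positive_iff)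
  have Py_eq: "Py_e = ennreal Py" using Py_fin by (simp add: Py_def less_top)
  have Pyp_eq: "Pyp_e = ennreal Pyp" using Pyp_fin by (simp add: Pyp_def less_top)
  have Pb_eq: "Pb_e = ennreal Pb" using Pb_fin by (simp add: Pb_def less_top)

  have Cpos: "0 < C z" if z: "z \<in> space MZ" for z
  proof -
    note mZ2[OF z, measurable]
    have "(\<lambda>g'. \<integral>\<^sup>+x'. ennreal (pX x' * pG x' g' * pT x' t * pZ g' x' z) \<partial>MX) \<in> borel_measurable MG"
      using pt by measurable
    then show ?thesis unfolding C_def
    proof (rule nn_pos[where h="pG x"])
      fix g' assume g': "g' \<in> space MG"
      have "(\<lambda>x'. ennreal (pX x' * pG x' g' * pT x' t * pZ g' x' z)) \<in> borel_measurable MX"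
        using pt g' by measurable
      then show "0 < (\<integral>\<^sup>+x'. ennreal (pX x' * pG x' g' * pT x' t * pZ g' x' z) \<partial>MX)"
        by (rule nn_pos[where h="pX"]) (use pt g' z in \<open>auto intro!: mult_pos_pos pos norm\<close>)
    qed (use pt in \<open>auto intro!: norm\<close>)
  qed
  have Cfin: "C z < \<infinity>" if z: "z \<in> space MZ" for z using fin(10)[OF z] m10[OF z] by simp

  have cY: "c_Y_given_ZT MG MX MT MY p z t y = pY z t y" if z: "z \<in> space MZ" for z
  proof -
    have "0 < enn2real (C z)" using Cpos[OF z] Cfin[OF z] by (simp add: enn2real_positive_iff)
    moreover have "0 \<le> pY z t y" using z pt by (auto intro!: nnf)
    ultimately show ?thesis
      by (simp add: c_Y_given_ZT_def cond_def m9[OF z] m10[OF z] enn2real_mult)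
  qed

  have LHS1: "c_Yp_given_YGXTTp MZ MY p g x t tp y yp = Pb / Py"
    using A4pos Py0 pt by (simp add: pos[THEN less_imp_neq[symmetric]] c_Yp_given_YGXTTp_def cond_def m1 m2 enn2real_mult Pb_def[symmetric] Py_def[symmetric])
  have LHS2: "c_Y_given_GXT MZ MT MY p g x t y = Py"
    using A3pos Py0 pt by (simp add: pos[THEN less_imp_neq[symmetric]] c_Y_given_GXT_def cond_def m3 m4 enn2real_mult Py_def[symmetric])
  have RHS2: "c_Yp_given_GXTp MZ MT MY p g x tp yp = Pyp"
    using A5pos Pyp0 pt by (simp add: pos[THEN less_imp_neq[symmetric]] c_Yp_given_GXTp_def cond_def m5 m6 enn2real_mult Pyp_def[symmetric])

  define q where "q = c_Z_given_YGXT MZ MT MY p g x t y"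
  define r where "r = c_Z_given_YpGXTp MZ MT MY p g x tp yp"
  define Q where "Q = density MZ (\<lambda>z. ennreal (q z))"
  have qz: "q z = pZ g x z * pY z t y / Py" if z: "z \<in> space MZ" for z
  proof -
    have "0 \<le> pX x * pG x g * pT x t * pZ g x z * pY z t y" using z pt by (auto intro!: mult_nonneg_nonneg nnf)
    then show ?thesis using A3pos Py0 pt z
      by (simp add: pos[THEN less_imp_neq[symmetric]] q_def c_Z_given_YGXT_def cond_def m7[OF z] m3 enn2real_mult Py_def[symmetric])
  qed
  have rz: "r z = pZ g x z * pYp z tp yp / Pyp" if z: "z \<in> space MZ" for z
  proof -
    have "0 \<le> pX x * pG x g * pTp x tp * pZ g x z * pYp z tp yp" using z pt by (auto intro!: mult_nonneg_nonneg nnf)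
    then show ?thesis using A5pos Pyp0 pt z
      by (simp add: pos[THEN less_imp_neq[symmetric]] r_def c_Z_given_YpGXTp_def cond_def m8[OF z] m5 enn2real_mult Pyp_def[symmetric])
  qed
  have "q \<in> borel_measurable MZ \<longleftrightarrow> (\<lambda>z. pZ g x z * pY z t y / Py) \<in> borel_measurable MZ"
    by (rule measurable_cong) (simp add: qz)
  then have mq[measurable]: "q \<in> borel_measurable MZ" by simp
  have "r \<in> borel_measurable MZ \<longleftrightarrow> (\<lambda>z. pZ g x z * pYp z tp yp / Pyp) \<in> borel_measurable MZ"
    by (rule measurable_cong) (simp add: rz)
  then have mr[measurable]: "r \<in> borel_measurable MZ" by simp
  have qpos: "0 < q z" if z: "z \<in> space MZ" for z using z pt Py0 by (simp add: qz pos)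
  have rpos: "0 < r z" if z: "z \<in> space MZ" for z using z pt Pyp0 by (simp add: rz pos)
  have spQ: "space Q = space MZ" by (simp add: Q_def)
  have "emeasure Q (space Q) = (\<integral>\<^sup>+z. ennreal (q z) * indicator (space MZ) z \<partial>MZ)"
    by (simp add: Q_def emeasure_density)
  also have "\<dots> = (\<integral>\<^sup>+z. ennreal ((1 / Py) * (pZ g x z * pY z t y)) \<partial>MZ)"
    by (intro nn_integral_cong) (simp add: qz)
  also have "\<dots> = ennreal (1 / Py) * Py_e"
    unfolding Py_e_def by (rule nn_scale) (use Py0 in auto)
  also have "\<dots> = 1" using Py0 by (simp add: Py_eq ennreal_mult[symmetric])
  finally interpret Qp: prob_space Q by (rule prob_spaceI)

  have KL: "KL_divergence (exp 1) (density MZ (\<lambda>z. ennreal (r z))) Q = (\<integral>z. ln (q z / r z) \<partial>Q)"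
  proof -
    have "KL_divergence (exp 1) (density MZ (\<lambda>z. ennreal (r z))) Q =
      (\<integral>z. q z * log (exp 1) (q z / r z) \<partial>MZ)"
      unfolding Q_def
      by (rule MZ.KL_density_density) (auto intro!: AE_I2 simp: mq mr less_imp_le qpos rpos dest: rpos)
    also have "\<dots> = (\<integral>z. q z *\<^sub>R ln (q z / r z) \<partial>MZ)" by (simp add: log_def)
    also have "\<dots> = (\<integral>z. ln (q z / r z) \<partial>Q)"
      unfolding Q_def by (rule integral_density[symmetric]) (auto intro!: AE_I2 simp: less_imp_le qpos)
    finally show ?thesis .
  qed

  have intY: "integrable Q (\<lambda>z. ln (pY z t y))"
  proof -
    have "integrable Q (\<lambda>z. ln (c_Y_given_ZT MG MX MT MY p z t y))"
      using int(1) unfolding q_def[symmetric] Q_def[symmetric] .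
    moreover have "integrable Q (\<lambda>z. ln (c_Y_given_ZT MG MX MT MY p z t y)) \<longleftrightarrow> integrable Q (\<lambda>z. ln (pY z t y))"
      using Bochner_Integration.integrable_cong[of Q Q "\<lambda>z. ln (c_Y_given_ZT MG MX MT MY p z t y)" "\<lambda>z. ln (pY z t y)"]
      by (auto simp: spQ cY)
    ultimately show ?thesis by simp
  qed
  have intD: "integrable Q (\<lambda>z. ln (q z / r z))"
    using int(2) unfolding q_def[symmetric] r_def[symmetric] Q_def[symmetric] .
  have IY: "(\<integral>z. ln (c_Y_given_ZT MG MX MT MY p z t y) \<partial>Q) = (\<integral>z. ln (pY z t y) \<partial>Q)"
    by (rule Bochner_Integration.integral_cong) (auto simp: spQ cY)

  have nnQ: "(\<integral>\<^sup>+z. ennreal (pYp z tp yp) \<partial>Q) = ennreal (Pb / Py)"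
  proof -
    have "(\<integral>\<^sup>+z. ennreal (pYp z tp yp) \<partial>Q) = (\<integral>\<^sup>+z. ennreal (q z) * ennreal (pYp z tp yp) \<partial>MZ)"
      unfolding Q_def by (rule nn_integral_density) measurable
    also have "\<dots> = (\<integral>\<^sup>+z. ennreal ((1 / Py) * (pZ g x z * pY z t y * pYp z tp yp)) \<partial>MZ)"
      by (intro nn_integral_cong) (use pt Py0 in \<open>auto simp: qz ennreal_mult[symmetric] less_imp_le pos\<close>)
    also have "\<dots> = ennreal (1 / Py) * Pb_e"
      unfolding Pb_e_def by (rule nn_scale) (use Py0 in auto)
    also have "\<dots> = ennreal (Pb / Py)" using Py0 Pb0 by (simp add: Pb_eq ennreal_mult[symmetric])
    finally show ?thesis .
  qed
  have mYpQ: "(\<lambda>z. pYp z tp yp) \<in> borel_measurable Q" unfolding Q_def by measurable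
  have nnYp: "AE z in Q. 0 \<le> pYp z tp yp" by (rule AE_I2) (use pt in \<open>auto simp: spQ intro!: nnf\<close>)
  have intYp: "integrable Q (\<lambda>z. pYp z tp yp)"
    by (rule integrableI_nonneg[OF mYpQ nnYp]) (simp add: nnQ)
  have IYp: "(\<integral>z. pYp z tp yp \<partial>Q) = Pb / Py"
    using Py0 Pb0 by (simp add: integral_eq_nn_integral[OF mYpQ nnYp] nnQ)

  have pw: "ln (pY z t y) - ln (q z / r z) \<le> pYp z tp yp * (Py / Pb) + (ln Pb - ln Pyp - 1)"
    if z: "z \<in> space Q" for z
  proof -
    have z': "z \<in> space MZ" using z spQ by simp
    have p1: "0 < pZ g x z" "0 < pY z t y" "0 < pYp z tp yp" using z' pt by (auto intro!: pos)
    have "q z / r z = (pY z t y * Pyp) / (pYp z tp yp * Py)"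
      using p1 Py0 Pyp0 by (simp add: qz[OF z'] rz[OF z'] field_simps)
    then have "ln (q z / r z) = ln (pY z t y) + ln Pyp - ln (pYp z tp yp) - ln Py"
      using p1 Py0 Pyp0 by (simp add: ln_div ln_mult)
    moreover have "ln (pYp z tp yp * Py / Pb) \<le> pYp z tp yp * Py / Pb - 1"
      using p1 Py0 Pb0 by (intro ln_le_minus_one) simp
    moreover have "ln (pYp z tp yp * Py / Pb) = ln (pYp z tp yp) + ln Py - ln Pb"
      using p1 Py0 Pb0 by (simp add: ln_div ln_mult)
    ultimately show ?thesis by simp
  qed

  have "(\<integral>z. ln (pY z t y) \<partial>Q) - (\<integral>z. ln (q z / r z) \<partial>Q) = (\<integral>z. ln (pY z t y) - ln (q z / r z) \<partial>Q)"
    using intY intD by simp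
  also have "\<dots> \<le> (\<integral>z. pYp z tp yp * (Py / Pb) + (ln Pb - ln Pyp - 1) \<partial>Q)"
    by (rule integral_mono) (use intY intD intYp pw in auto)
  also have "\<dots> = (\<integral>z. pYp z tp yp \<partial>Q) * (Py / Pb) + (ln Pb - ln Pyp - 1)"
    using intYp Qp.prob_space by simp
  also have "\<dots> = ln Pb - ln Pyp" using IYp Py0 Pb0 by simp
  finally have main: "(\<integral>z. ln (pY z t y) \<partial>Q) - (\<integral>z. ln (q z / r z) \<partial>Q) \<le> ln Pb - ln Pyp" .

  show ?thesis
    unfolding q_def[symmetric] r_def[symmetric] Q_def[symmetric]
    using main Py0 Pb0 by (simp add: LHS1 LHS2 RHS2 IY KL ln_div)
qed

end
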